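(* Consider an execution of the ABC protocol under the standing assumptions, producing transaction DAG $G$, and fix a total order $<_{time}$ of the messages respecting references. Let $t_0$ be the first transaction (other than genesis) confirmed in $G$, i.e. one admitting a witnessing ack set $A_{t_0}$ whose $<_{time}$-maximal element is minimal among all witnessing ack sets of all confirmed transactions. Then for every confirmed transaction $t$ of $G$ (with witnessing ack set $A_t$), either $t_0\in\mathrm{past}(A_t)$ or $t\in\mathrm{past}(A_{t_0})$.
   Context: ABC is a cryptocurrency protocol. An output is a pair (value, owner public key). A transaction $t$ has inputs (outputs of earlier transactions, which $t$ spends), outputs with the same total value, and a validator public key; it is signed by its inputs' secret keys. The genesis is a special input-less transaction with outputs summing to $M$, confirmed from the start. An ack is a validator-signed message containing a reference to the previous ack of the same validator and references to transactions the validator signs. Messages reference only earlier messages, forming a DAG rooted at genesis. $\mathrm{past}(x)$ is the set of messages reachable from $x$ by following references; $\mathrm{past}(A)=\bigcup_{x\in A}\mathrm{past}(x)$. The stake delegated to validator $v$ in $\mathrm{past}(A)$ is the sum of values of outputs, unspent in $\mathrm{past}(A)$, of transactions confirmed in $\mathrm{past}(A)$ indicating $v$ as validator. A transaction $t$ is confirmed if transactions producing its inputs are confirmed and there is a set of acks $A_t$ (a witnessing ack set) such that validators signing $t$ in $A_t$ have total delegated stake in $\mathrm{past}(A_t)$ exceeding $\tfrac23 M$ and no other transaction in $\mathrm{past}(A_t)$ shares an input with $t$. Standing assumptions: honest validators always reference their own previous ack in each new ack and never sign two transactions sharing an input; honest agents never spend an output twice; the adversary behaves arbitrarily (may issue conflicting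 transactions, acks not referencing previous acks, etc.) and controls message delivery (messages are eventually delivered, with no timing bound); the stake delegated to the adversary is always less than $M/3$, where in particular the genesis outputs delegated to adversarial validators sum to less than $M/3$, and subsequently a transaction delegated to an honest validator reduces the adversary's count by the value of its adversary-delegated inputs when it is confirmed, while a transaction delegated to the adversary increases the count by the value of its honest-delegated inputs when it is issued. *)

theory Defs
  imports Complex_Main
begin

text \<open>An abstract model of an execution of the ABC protocol.
  Messages have type 'm, public keys have type 'k.  An output is identified
  by an outpoint (t, i): the i-th output of transaction t.\<close>

record ('m, 'k) abc =
  msgs    :: "'m set"
  is_ack  :: "'m \<Rightarrow> bool"
  ins     :: "'m \<Rightarrow> ('m \<times> nat) set"
  outs    :: "'m \<Rightarrow> (real \<times> 'k) list"   \<comment> \<open>outputs (value, owner key)\<close>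
  txval   :: "'m \<Rightarrow> 'k"
  gdeleg  :: "nat \<Rightarrow> 'k"               \<comment> \<open>validator of the i-th genesis output\<close>
  ackval  :: "'m \<Rightarrow> 'k"
  prev    :: "'m \<Rightarrow> 'm option"
  signs   :: "'m \<Rightarrow> 'm set"
  genesis :: "'m"
  honest  :: "'k \<Rightarrow> bool"
  tlt     :: "'m \<Rightarrow> 'm \<Rightarrow> bool"
  totalM  :: real

definition is_tx :: "('m,'k) abc \<Rightarrow> 'm \<Rightarrow> bool" where
  "is_tx E t \<longleftrightarrow> \<not> is_ack E t"

definition refs :: "('m,'k) abc \<Rightarrow> 'm \<Rightarrow> 'm set" where
  "refs E x = (if is_ack E x then set_option (prev E x) \<union> signs E x else fst ` ins E x)"

definition past1 :: "('m,'k) abc \<Rightarrow> 'm \<Rightarrow> 'm set" where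
  "past1 E x = {y. (x, y) \<in> {(u, w). w \<in> refs E u}\<^sup>*}"

definition past :: "('m,'k) abc \<Rightarrow> 'm set \<Rightarrow> 'm set" where
  "past E A = (\<Union>x\<in>A. past1 E x)"

definition oval :: "('m,'k) abc \<Rightarrow> 'm \<times> nat \<Rightarrow> real" where
  "oval E u = fst (outs E (fst u) ! snd u)"

definition owner :: "('m,'k) abc \<Rightarrow> 'm \<times> nat \<Rightarrow> 'k" where
  "owner E u = snd (outs E (fst u) ! snd u)"

definition deleg :: "('m,'k) abc \<Rightarrow> 'm \<times> nat \<Rightarrow> 'k" where
  "deleg E u = (if fst u = genesis E then gdeleg E (snd u) else txval E (fst u))"

definition unspent :: "('m,'k) abc \<Rightarrow> 'm set \<Rightarrow> 'm \<times> nat \<Rightarrow> bool" where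
  "unspent E X u \<longleftrightarrow> \<not> (\<exists>t'\<in>X. is_tx E t' \<and> u \<in> ins E t')"

text \<open>Stake delegated to v in X, given a notion C X t of "t confirmed in X".\<close>
definition stake_with ::
  "('m,'k) abc \<Rightarrow> ('m set \<Rightarrow> 'm \<Rightarrow> bool) \<Rightarrow> 'm set \<Rightarrow> 'k \<Rightarrow> real" where
  "stake_with E C X v =
     (\<Sum>u \<in> {u. fst u \<in> X \<and> fst u \<in> msgs E \<and> is_tx E (fst u) \<and> C X (fst u)
              \<and> snd u < length (outs E (fst u)) \<and> deleg E u = v \<and> unspent E X u}. oval E u)"

definition signers :: "('m,'k) abc \<Rightarrow> 'm \<Rightarrow> 'm set \<Rightarrow> 'k set" where
  "signers E t A = {ackval E a | a. a \<in> A \<and> t \<in> signs E a}"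

definition witness_with ::
  "('m,'k) abc \<Rightarrow> ('m set \<Rightarrow> 'm \<Rightarrow> bool) \<Rightarrow> 'm \<Rightarrow> 'm set \<Rightarrow> bool" where
  "witness_with E C t A \<longleftrightarrow>
     finite A \<and> (\<forall>a\<in>A. is_ack E a)
     \<and> (\<Sum>v\<in>signers E t A. stake_with E C (past E A) v) > 2/3 * totalM E
     \<and> (\<forall>t'\<in>past E A. is_tx E t' \<and> t' \<noteq> t \<longrightarrow> ins E t' \<inter> ins E t = {})"

definition conf_step ::
  "('m,'k) abc \<Rightarrow> ('m set \<Rightarrow> 'm \<Rightarrow> bool) \<Rightarrow> ('m set \<Rightarrow> 'm \<Rightarrow> bool)" where
  "conf_step E C = (\<lambda>D t. t = genesis E \<or>
      (is_tx E t \<and> (\<forall>u\<in>ins E t. C D (fst u)) \<and> (\<exists>A. A \<subseteq> D \<and> witness_with E C t A)))"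

definition conf :: "('m,'k) abc \<Rightarrow> 'm set \<Rightarrow> 'm \<Rightarrow> bool" where
  "conf E = lfp (conf_step E)"

definition witnessing :: "('m,'k) abc \<Rightarrow> 'm \<Rightarrow> 'm set \<Rightarrow> bool" where
  "witnessing E t A \<longleftrightarrow> witness_with E (conf E) t A"

definition tle :: "('m,'k) abc \<Rightarrow> 'm \<Rightarrow> 'm \<Rightarrow> bool" where
  "tle E x y \<longleftrightarrow> x = y \<or> tlt E x y"

definition prefix :: "('m,'k) abc \<Rightarrow> 'm \<Rightarrow> 'm set" where
  "prefix E \<tau> = {m \<in> msgs E. tle E m \<tau>}"

definition tmax :: "('m,'k) abc \<Rightarrow> 'm set \<Rightarrow> 'm" where
  "tmax E A = (THE m. m \<in> A \<and> (\<forall>a\<in>A. tle E a m))"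

definition genesis_adv :: "('m,'k) abc \<Rightarrow> real" where
  "genesis_adv E = (\<Sum>i | i < length (outs E (genesis E)) \<and> \<not> honest E (gdeleg E i).
                      oval E (genesis E, i))"

definition adv_count :: "('m,'k) abc \<Rightarrow> 'm \<Rightarrow> real" where
  "adv_count E \<tau> = genesis_adv E
     - (\<Sum>t | t \<in> msgs E \<and> is_tx E t \<and> t \<noteq> genesis E \<and> honest E (txval E t)
              \<and> conf E (prefix E \<tau>) t.
          \<Sum>u | u \<in> ins E t \<and> \<not> honest E (deleg E u). oval E u)
     + (\<Sum>t | t \<in> msgs E \<and> is_tx E t \<and> t \<noteq> genesis E \<and> \<not> honest E (txval E t)
              \<and> tle E t \<tau>.
          \<Sum>u | u \<in> ins E t \<and> honest E (deleg E u). oval E u)"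

definition abc_execution :: "('m,'k) abc \<Rightarrow> bool" where
  "abc_execution E \<longleftrightarrow>
     finite (msgs E)
   \<comment> \<open>genesis\<close>
   \<and> genesis E \<in> msgs E \<and> is_tx E (genesis E) \<and> ins E (genesis E) = {}
   \<and> (\<Sum>p\<leftarrow>outs E (genesis E). fst p) = totalM E
   \<comment> \<open>the time order: strict total order on G respecting references\<close>
   \<and> (\<forall>x\<in>msgs E. \<not> tlt E x x)
   \<and> (\<forall>x\<in>msgs E. \<forall>y\<in>msgs E. \<forall>z\<in>msgs E. tlt E x y \<longrightarrow> tlt E y z \<longrightarrow> tlt E x z)
   \<and> (\<forall>x\<in>msgs E. \<forall>y\<in>msgs E. x \<noteq> y \<longrightarrow> tlt E x y \<or> tlt E y x)
   \<and> (\<forall>x\<in>msgs E. \<forall>y\<in>refs E x. y \<in> msgs E \<and> tlt E y x)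
   \<comment> \<open>well-formed transactions\<close>
   \<and> (\<forall>t\<in>msgs E. is_tx E t \<longrightarrow>
        finite (ins E t)
      \<and> (\<forall>u\<in>ins E t. is_tx E (fst u) \<and> snd u < length (outs E (fst u)))
      \<and> (\<forall>p\<in>set (outs E t). fst p \<ge> 0)
      \<and> (t \<noteq> genesis E \<longrightarrow> ins E t \<noteq> {}
           \<and> (\<Sum>u\<in>ins E t. oval E u) = (\<Sum>p\<leftarrow>outs E t. fst p)))
   \<comment> \<open>well-formed acks\<close>
   \<and> (\<forall>a\<in>msgs E. is_ack E a \<longrightarrow>
        (\<forall>t\<in>signs E a. is_tx E t)
      \<and> (\<forall>p. prev E a = Some p \<longrightarrow> is_ack E p \<and> ackval E p = ackval E a))
   \<comment> \<open>honest validators reference their own previous ack\<close>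
   \<and> (\<forall>a\<in>msgs E. is_ack E a \<and> honest E (ackval E a) \<longrightarrow>
        (case prev E a of
           None \<Rightarrow> \<not> (\<exists>b\<in>msgs E. is_ack E b \<and> ackval E b = ackval E a \<and> tlt E b a)
         | Some p \<Rightarrow> p \<in> msgs E \<and> tlt E p a \<and>
             (\<forall>b\<in>msgs E. is_ack E b \<and> ackval E b = ackval E a \<and> tlt E b a
                 \<longrightarrow> b = p \<or> tlt E b p)))
   \<comment> \<open>honest validators never sign two transactions sharing an input\<close>
   \<and> (\<forall>a\<in>msgs E. \<forall>b\<in>msgs E. is_ack E a \<and> is_ack E b \<and> ackval E a = ackval E b
        \<and> honest E (ackval E a) \<longrightarrow>
        (\<forall>t\<in>signs E a. \<forall>t'\<in>signs E b. t \<noteq> t' \<longrightarrow> ins E t \<inter> ins E t' = {}))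
   \<comment> \<open>honest agents never spend an output twice\<close>
   \<and> (\<forall>t\<in>msgs E. \<forall>t'\<in>msgs E. \<forall>u. is_tx E t \<and> is_tx E t' \<and> u \<in> ins E t \<and> u \<in> ins E t'
        \<and> honest E (owner E u) \<longrightarrow> t = t')
   \<comment> \<open>adversarial stake always below M/3\<close>
   \<and> genesis_adv E < totalM E / 3
   \<and> (\<forall>\<tau>\<in>msgs E. adv_count E \<tau> < totalM E / 3)"

end

theory Submission
  imports Defs
begin


lemma past1_self: "x \<in> past1 E x" unfolding past1_def by simp
lemma past1_step: "y \<in> refs E x \<Longrightarrow> z \<in> past1 E y \<Longrightarrow> z \<in> past1 E x"
  unfolding past1_def by (simp add: converse_rtrancl_into_rtrancl)
lemma past1_trans: "y \<in> past1 E x \<Longrightarrow> z \<in> past1 E y \<Longrightarrow> z \<in> past1 E x"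
  unfolding past1_def by simp
lemma past_iff: "y \<in> past E B \<longleftrightarrow> (\<exists>x\<in>B. y \<in> past1 E x)"
  unfolding past_def by (rule UN_iff)
lemma past_mono: "B1 \<subseteq> past E B \<Longrightarrow> past E B1 \<subseteq> past E B"
proof
  fix x assume B1: "B1 \<subseteq> past E B" and x: "x \<in> past E B1"
  from x obtain y where y: "y \<in> B1" "x \<in> past1 E y" unfolding past_iff ..
  from y(1) B1 have "y \<in> past E B" by (rule subsetD[rotated])
  then obtain z where z: "z \<in> B" "y \<in> past1 E z" unfolding past_iff ..
  have "x \<in> past1 E z" by (rule past1_trans[OF z(2) y(2)])
  with z(1) show "x \<in> past E B" unfolding past_iff ..
qed
lemma past_sub: "B \<subseteq> past E B"
proof
  fix x assume "x \<in> B" then show "x \<in> past E B" unfolding past_iff using past1_self ..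
qed
lemma past_closed: "y \<in> past E B \<Longrightarrow> z \<in> refs E y \<Longrightarrow> z \<in> past E B"
proof -
  assume y: "y \<in> past E B" and z: "z \<in> refs E y"
  from y obtain x where x: "x \<in> B" "y \<in> past1 E x" unfolding past_iff ..
  have "z \<in> past1 E y" using past1_step[OF z past1_self] .
  then have "z \<in> past1 E x" by (rule past1_trans[OF x(2)])
  with x(1) show ?thesis unfolding past_iff ..
qed

context
  fixes E :: "('m,'k) abc"
  assumes exec: "abc_execution E"
begin


lemma c1: "finite (msgs E)" by (rule exec[unfolded abc_execution_def, THEN conjunct1])
lemma c2: "genesis E \<in> msgs E" by (rule exec[unfolded abc_execution_def, THEN conjunct2, THEN conjunct1])
lemma c3: "is_tx E (genesis E)" by (rule exec[unfolded abc_execution_def, THEN conjunct2, THEN conjunct2, THEN conjunct1])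
lemma c4: "ins E (genesis E) = {}" by (rule exec[unfolded abc_execution_def, THEN conjunct2, THEN conjunct2, THEN conjunct2, THEN conjunct1])
lemma c5: "(\<Sum>p\<leftarrow>outs E (genesis E). fst p) = totalM E" by (rule exec[unfolded abc_execution_def, THEN conjunct2, THEN conjunct2, THEN conjunct2, THEN conjunct2, THEN conjunct1])
lemma c6: "\<forall>x\<in>msgs E. \<not> tlt E x x" by (rule exec[unfolded abc_execution_def, THEN conjunct2, THEN conjunct2, THEN conjunct2, THEN conjunct2, THEN conjunct2, THEN conjunct1])
lemma c7: "\<forall>x\<in>msgs E. \<forall>y\<in>msgs E. \<forall>z\<in>msgs E. tlt E x y \<longrightarrow> tlt E y z \<longrightarrow> tlt E x z" by (rule exec[unfolded abc_execution_def, THEN conjunct2, THEN conjunct2, THEN conjunct2, THEN conjunct2, THEN conjunct2, THEN conjunct2, THEN conjunct1])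
lemma c8: "\<forall>x\<in>msgs E. \<forall>y\<in>msgs E. x \<noteq> y \<longrightarrow> tlt E x y \<or> tlt E y x" by (rule exec[unfolded abc_execution_def, THEN conjunct2, THEN conjunct2, THEN conjunct2, THEN conjunct2, THEN conjunct2, THEN conjunct2, THEN conjunct2, THEN conjunct1])
lemma c9: "\<forall>x\<in>msgs E. \<forall>y\<in>refs E x. y \<in> msgs E \<and> tlt E y x" by (rule exec[unfolded abc_execution_def, THEN conjunct2, THEN conjunct2, THEN conjunct2, THEN conjunct2, THEN conjunct2, THEN conjunct2, THEN conjunct2, THEN conjunct2, THEN conjunct1])
lemma c10: "\<forall>t\<in>msgs E. is_tx E t \<longrightarrow>
        finite (ins E t)
      \<and> (\<forall>u\<in>ins E t. is_tx E (fst u) \<and> snd u < length (outs E (fst u)))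
      \<and> (\<forall>p\<in>set (outs E t). fst p \<ge> 0)
      \<and> (t \<noteq> genesis E \<longrightarrow> ins E t \<noteq> {}
           \<and> (\<Sum>u\<in>ins E t. oval E u) = (\<Sum>p\<leftarrow>outs E t. fst p))" by (rule exec[unfolded abc_execution_def, THEN conjunct2, THEN conjunct2, THEN conjunct2, THEN conjunct2, THEN conjunct2, THEN conjunct2, THEN conjunct2, THEN conjunct2, THEN conjunct2, THEN conjunct1])
lemma c11: "\<forall>a\<in>msgs E. is_ack E a \<longrightarrow>
        (\<forall>t\<in>signs E a. is_tx E t)
      \<and> (\<forall>p. prev E a = Some p \<longrightarrow> is_ack E p \<and> ackval E p = ackval E a)" by (rule exec[unfolded abc_execution_def, THEN conjunct2, THEN conjunct2, THEN conjunct2, THEN conjunct2, THEN conjunct2, THEN conjunct2, THEN conjunct2, THEN conjunct2, THEN conjunct2, THEN conjunct2, THEN conjunct1])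
lemma c12: "\<forall>a\<in>msgs E. is_ack E a \<and> honest E (ackval E a) \<longrightarrow>
        (case prev E a of
           None \<Rightarrow> \<not> (\<exists>b\<in>msgs E. is_ack E b \<and> ackval E b = ackval E a \<and> tlt E b a)
         | Some p \<Rightarrow> p \<in> msgs E \<and> tlt E p a \<and>
             (\<forall>b\<in>msgs E. is_ack E b \<and> ackval E b = ackval E a \<and> tlt E b a
                 \<longrightarrow> b = p \<or> tlt E b p))" by (rule exec[unfolded abc_execution_def, THEN conjunct2, THEN conjunct2, THEN conjunct2, THEN conjunct2, THEN conjunct2, THEN conjunct2, THEN conjunct2, THEN conjunct2, THEN conjunct2, THEN conjunct2, THEN conjunct2, THEN conjunct1])
lemma c13: "\<forall>a\<in>msgs E. \<forall>b\<in>msgs E. is_ack E a \<and> is_ack E b \<and> ackval E a = ackval E b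
        \<and> honest E (ackval E a) \<longrightarrow>
        (\<forall>t\<in>signs E a. \<forall>t'\<in>signs E b. t \<noteq> t' \<longrightarrow> ins E t \<inter> ins E t' = {})" by (rule exec[unfolded abc_execution_def, THEN conjunct2, THEN conjunct2, THEN conjunct2, THEN conjunct2, THEN conjunct2, THEN conjunct2, THEN conjunct2, THEN conjunct2, THEN conjunct2, THEN conjunct2, THEN conjunct2, THEN conjunct2, THEN conjunct1])
lemma c15: "genesis_adv E < totalM E / 3" by (rule exec[unfolded abc_execution_def, THEN conjunct2, THEN conjunct2, THEN conjunct2, THEN conjunct2, THEN conjunct2, THEN conjunct2, THEN conjunct2, THEN conjunct2, THEN conjunct2, THEN conjunct2, THEN conjunct2, THEN conjunct2, THEN conjunct2, THEN conjunct2, THEN conjunct1])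
lemma c16: "\<forall>\<tau>\<in>msgs E. adv_count E \<tau> < totalM E / 3" by (rule exec[unfolded abc_execution_def, THEN conjunct2, THEN conjunct2, THEN conjunct2, THEN conjunct2, THEN conjunct2, THEN conjunct2, THEN conjunct2, THEN conjunct2, THEN conjunct2, THEN conjunct2, THEN conjunct2, THEN conjunct2, THEN conjunct2, THEN conjunct2, THEN conjunct2])

lemma fin_msgs: "finite (msgs E)" by (rule c1)
lemma gen_in: "genesis E \<in> msgs E" by (rule c2)
lemma gen_tx: "is_tx E (genesis E)" by (rule c3)
lemma gen_ins: "ins E (genesis E) = {}" by (rule c4)
lemma gen_sum: "(\<Sum>p\<leftarrow>outs E (genesis E). fst p) = totalM E" by (rule c5)
lemma irr: "x \<in> msgs E \<Longrightarrow> \<not> tlt E x x" using c6 by blast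
lemma trans: "x \<in> msgs E \<Longrightarrow> y \<in> msgs E \<Longrightarrow> z \<in> msgs E \<Longrightarrow> tlt E x y \<Longrightarrow> tlt E y z \<Longrightarrow> tlt E x z"
  using c7 by blast
lemma total: "x \<in> msgs E \<Longrightarrow> y \<in> msgs E \<Longrightarrow> x \<noteq> y \<Longrightarrow> tlt E x y \<or> tlt E y x"
  using c8 by blast
lemma refs_ok: "x \<in> msgs E \<Longrightarrow> y \<in> refs E x \<Longrightarrow> y \<in> msgs E \<and> tlt E y x"
  using c9 by blast
lemma tx_fin: "t \<in> msgs E \<Longrightarrow> is_tx E t \<Longrightarrow> finite (ins E t)"
  using c10 by blast
lemma tx_in: "t \<in> msgs E \<Longrightarrow> is_tx E t \<Longrightarrow> u \<in> ins E t \<Longrightarrow> is_tx E (fst u) \<and> snd u < length (outs E (fst u))"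
  using c10 by blast
lemma tx_nonneg: "t \<in> msgs E \<Longrightarrow> is_tx E t \<Longrightarrow> p \<in> set (outs E t) \<Longrightarrow> fst p \<ge> 0"
  using c10 by blast
lemma tx_cons: "t \<in> msgs E \<Longrightarrow> is_tx E t \<Longrightarrow> t \<noteq> genesis E \<Longrightarrow>
   (\<Sum>u\<in>ins E t. oval E u) = (\<Sum>p\<leftarrow>outs E t. fst p)"
  using c10 by blast
lemma ack_signs: "a \<in> msgs E \<Longrightarrow> is_ack E a \<Longrightarrow> t \<in> signs E a \<Longrightarrow> is_tx E t"
  using c11 by blast
lemma ack_prev: "a \<in> msgs E \<Longrightarrow> is_ack E a \<Longrightarrow> prev E a = Some p \<Longrightarrow> is_ack E p \<and> ackval E p = ackval E a"
  using c11 by blast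
lemma honest_prev: "a \<in> msgs E \<Longrightarrow> is_ack E a \<Longrightarrow> honest E (ackval E a) \<Longrightarrow>
        (case prev E a of
           None \<Rightarrow> \<not> (\<exists>b\<in>msgs E. is_ack E b \<and> ackval E b = ackval E a \<and> tlt E b a)
         | Some p \<Rightarrow> p \<in> msgs E \<and> tlt E p a \<and>
             (\<forall>b\<in>msgs E. is_ack E b \<and> ackval E b = ackval E a \<and> tlt E b a
                 \<longrightarrow> b = p \<or> tlt E b p))"
  using c12 by blast
lemma honest_nodouble: "a \<in> msgs E \<Longrightarrow> b \<in> msgs E \<Longrightarrow> is_ack E a \<Longrightarrow> is_ack E b \<Longrightarrow> ackval E a = ackval E b
   \<Longrightarrow> honest E (ackval E a) \<Longrightarrow> t \<in> signs E a \<Longrightarrow> t' \<in> signs E b \<Longrightarrow> t \<noteq> t' \<Longrightarrow> ins E t \<inter> ins E t' = {}"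
  using c13 by blast
lemma gadv_lt: "genesis_adv E < totalM E / 3" by (rule c15)
lemma advc_lt: "\<tau> \<in> msgs E \<Longrightarrow> adv_count E \<tau> < totalM E / 3"
  using c16 by blast

lemma oval_nonneg: "fst u \<in> msgs E \<Longrightarrow> is_tx E (fst u) \<Longrightarrow> snd u < length (outs E (fst u)) \<Longrightarrow> oval E u \<ge> 0"
  unfolding oval_def by (rule tx_nonneg) auto

lemma gadv_nonneg: "genesis_adv E \<ge> 0"
  unfolding genesis_adv_def using gen_in gen_tx by (intro sum_nonneg oval_nonneg) auto

lemma M_pos: "totalM E > 0" using gadv_nonneg gadv_lt by linarith

lemma past1_msgs: "x \<in> msgs E \<Longrightarrow> y \<in> past1 E x \<Longrightarrow> y \<in> msgs E \<and> tle E y x"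
proof -
  assume x: "x \<in> msgs E" and y: "y \<in> past1 E x"
  from y have "(x, y) \<in> {(u, w). w \<in> refs E u}\<^sup>*" unfolding past1_def by simp
  then show ?thesis
  proof (induction rule: rtrancl_induct)
    case base then show ?case using x by (simp add: tle_def)
  next
    case (step y z)
    then have "z \<in> msgs E" "tlt E z y" using refs_ok by auto
    with step show ?case unfolding tle_def using trans x by blast
  qed
qed

lemma past_msgs: "B \<subseteq> msgs E \<Longrightarrow> past E B \<subseteq> msgs E"
  unfolding past_def using past1_msgs by blast

lemma tle_trans: "x \<in> msgs E \<Longrightarrow> y \<in> msgs E \<Longrightarrow> z \<in> msgs E \<Longrightarrow> tle E x y \<Longrightarrow> tle E y z \<Longrightarrow> tle E x z"
  unfolding tle_def using trans by blast

lemma tmax_prop: assumes "finite A" "A \<noteq> {}" "A \<subseteq> msgs E"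
  shows "tmax E A \<in> A \<and> (\<forall>a\<in>A. tle E a (tmax E A))"
proof -
  have ex: "\<exists>m. m \<in> A \<and> (\<forall>a\<in>A. tle E a m)" using assms
  proof (induction A rule: finite_ne_induct)
    case (singleton x) then show ?case by (simp add: tle_def)
  next
    case (insert x F)
    then obtain m where m: "m \<in> F" "\<forall>a\<in>F. tle E a m" by auto
    have xm: "x \<in> msgs E" "m \<in> msgs E" using insert.prems m(1) by auto
    show ?case
    proof (cases "tlt E m x")
      case True
      have "\<forall>a\<in>insert x F. tle E a x"
      proof
        fix a assume a: "a \<in> insert x F"
        show "tle E a x"
        proof (cases "a = x")
          case True then show ?thesis by (simp add: tle_def)
        next
          case False
          then have "a \<in> F" using a by simp
          then have "tle E a m" "a \<in> msgs E" using m insert.prems by auto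
          then show ?thesis using tle_trans[of a m x] xm True by (simp add: tle_def)
        qed
      qed
      then show ?thesis by blast
    next
      case False
      then have "tle E x m" using total[of x m] xm unfolding tle_def by auto
      then show ?thesis using m by auto
    qed
  qed
  have uniq: "m1 = m2" if "m1 \<in> A" "\<forall>a\<in>A. tle E a m1" "m2 \<in> A" "\<forall>a\<in>A. tle E a m2" for m1 m2
  proof (rule ccontr)
    assume ne: "m1 \<noteq> m2"
    have "tlt E m1 m2" "tlt E m2 m1" using that ne unfolding tle_def by auto
    moreover have "m1 \<in> msgs E" "m2 \<in> msgs E" using that assms(3) by auto
    ultimately show False using trans[of m1 m2 m1] irr by blast
  qed
  from ex obtain m where m: "m \<in> A \<and> (\<forall>a\<in>A. tle E a m)" by blast
  have "tmax E A = m" unfolding tmax_def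
    by (rule the_equality) (use m uniq in blast)+
  then show ?thesis using m by simp
qed

end


definition iter :: "('m,'k) abc \<Rightarrow> nat \<Rightarrow> 'm set \<Rightarrow> 'm \<Rightarrow> bool" where
  "iter E n = (conf_step E ^^ n) (\<lambda>_ _. False)"

lemma iter_0[simp]: "iter E 0 D t = False" by (simp add: iter_def)
lemma iter_Suc: "iter E (Suc n) = conf_step E (iter E n)" by (simp add: iter_def)
lemma iter_Suc_iff: "iter E (Suc n) D t \<longleftrightarrow> t = genesis E \<or>
      (is_tx E t \<and> (\<forall>u\<in>ins E t. iter E n D (fst u)) \<and> (\<exists>A. A \<subseteq> D \<and> witness_with E (iter E n) t A))"
  by (simp add: iter_Suc conf_step_def)

definition outset :: "('m,'k) abc \<Rightarrow> ('m \<times> nat) set" where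
  "outset E = (SIGMA x:msgs E. {..<length (outs E x)})"

context
  fixes E :: "('m,'k) abc"
  assumes exec: "abc_execution E"
begin

lemma outset_fin: "finite (outset E)"
  unfolding outset_def using fin_msgs[OF exec] by auto

lemma stake_set_sub: "{u. fst u \<in> X \<and> fst u \<in> msgs E \<and> is_tx E (fst u) \<and> C X (fst u)
              \<and> snd u < length (outs E (fst u)) \<and> deleg E u = v \<and> unspent E X u} \<subseteq> outset E"
  unfolding outset_def by auto

lemma stake_mono:
  assumes "\<And>x. x \<in> X \<Longrightarrow> x \<in> msgs E \<Longrightarrow> is_tx E x \<Longrightarrow> C X x \<Longrightarrow> C' X x"
  shows "stake_with E C X v \<le> stake_with E C' X v"
  unfolding stake_with_def
proof (rule sum_mono2)
  show "finite {u. fst u \<in> X \<and> fst u \<in> msgs E \<and> is_tx E (fst u) \<and> C' X (fst u)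
              \<and> snd u < length (outs E (fst u)) \<and> deleg E u = v \<and> unspent E X u}"
    by (rule finite_subset[OF stake_set_sub outset_fin])
  show "{u. fst u \<in> X \<and> fst u \<in> msgs E \<and> is_tx E (fst u) \<and> C X (fst u)
              \<and> snd u < length (outs E (fst u)) \<and> deleg E u = v \<and> unspent E X u} \<subseteq>
        {u. fst u \<in> X \<and> fst u \<in> msgs E \<and> is_tx E (fst u) \<and> C' X (fst u)
              \<and> snd u < length (outs E (fst u)) \<and> deleg E u = v \<and> unspent E X u}"
    using assms by auto
qed (use oval_nonneg[OF exec] in auto)

lemma witness_mono:
  assumes "witness_with E C t A"
    and "\<And>x. x \<in> past E A \<Longrightarrow> x \<in> msgs E \<Longrightarrow> is_tx E x \<Longrightarrow> C (past E A) x \<Longrightarrow> C' (past E A) x"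
  shows "witness_with E C' t A"
proof -
  have "(\<Sum>v\<in>signers E t A. stake_with E C (past E A) v) \<le> (\<Sum>v\<in>signers E t A. stake_with E C' (past E A) v)"
    by (rule sum_mono, rule stake_mono) (use assms(2) in auto)
  then show ?thesis using assms(1) unfolding witness_with_def by auto
qed

lemma step_mono: "mono (conf_step E)"
proof (rule monoI)
  fix C C' :: "'m set \<Rightarrow> 'm \<Rightarrow> bool" assume le: "C \<le> C'"
  show "conf_step E C \<le> conf_step E C'"
  proof (rule le_funI, rule le_funI, rule le_boolI)
    fix D t assume "conf_step E C D t"
    then consider "t = genesis E" | A where "is_tx E t" "\<forall>u\<in>ins E t. C D (fst u)" "A \<subseteq> D" "witness_with E C t A"
      unfolding conf_step_def by blast
    then show "conf_step E C' D t"
    proof cases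
      case 1 then show ?thesis unfolding conf_step_def by simp
    next
      case (2 A)
      have "witness_with E C' t A" using 2(4) by (rule witness_mono) (use le in \<open>auto simp: le_fun_def\<close>)
      moreover have "\<forall>u\<in>ins E t. C' D (fst u)" using 2(2) le by (auto simp: le_fun_def)
      ultimately show ?thesis using 2 unfolding conf_step_def by blast
    qed
  qed
qed

lemma iter_le_Suc: "iter E n \<le> iter E (Suc n)"
proof (induction n)
  case 0 then show ?case by (simp add: le_fun_def)
next
  case (Suc n)
  then show ?case unfolding iter_Suc[of E "Suc n"] iter_Suc[of E n] by (rule monoD[OF step_mono])
qed

lemma iter_mono_n: "n \<le> N \<Longrightarrow> iter E n D t \<Longrightarrow> iter E N D t"
  using lift_Suc_mono_le[of "iter E", OF iter_le_Suc] by (auto simp: le_fun_def)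

lemma conf_unfold: "conf E = conf_step E (conf E)"
  unfolding conf_def using lfp_unfold[OF step_mono] .

lemma iter_le_conf: "iter E n \<le> conf E"
proof (induction n)
  case 0 then show ?case by (simp add: le_fun_def)
next
  case (Suc n)
  have "conf_step E (iter E n) \<le> conf_step E (conf E)" using Suc step_mono by (rule monoD[rotated])
  then show ?case using conf_unfold iter_Suc by metis
qed

lemma iter_conf: "iter E n D t \<Longrightarrow> conf E D t"
  using iter_le_conf by (auto simp: le_fun_def)

lemma iter_mono_D: "iter E n D t \<Longrightarrow> D \<subseteq> D' \<Longrightarrow> iter E n D' t"
proof (induction n arbitrary: D t)
  case 0 then show ?case by simp
next
  case (Suc n)
  from Suc.prems(1) consider "t = genesis E" | A where "is_tx E t" "\<forall>u\<in>ins E t. iter E n D (fst u)" "A \<subseteq> D" "witness_with E (iter E n) t A"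
    unfolding iter_Suc_iff by blast
  then show ?case
  proof cases
    case 1 then show ?thesis by (simp add: iter_Suc_iff)
  next
    case (2 A)
    have "\<forall>u\<in>ins E t. iter E n D' (fst u)" using 2(2) Suc.IH Suc.prems(2) by blast
    moreover have "A \<subseteq> D'" using 2(3) Suc.prems(2) by blast
    ultimately show ?thesis using 2 unfolding iter_Suc_iff by blast
  qed
qed

lemma finite_bound:
  fixes Q :: "'a \<Rightarrow> nat \<Rightarrow> bool"
  assumes "finite S" "\<And>x. x \<in> S \<Longrightarrow> \<exists>n. Q x n" "\<And>x n N. Q x n \<Longrightarrow> n \<le> N \<Longrightarrow> Q x N"
  shows "\<exists>N. \<forall>x\<in>S. Q x N"
  using assms(1,2)
proof (induction S rule: finite_induct)
  case empty then show ?case by simp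
next
  case (insert x F)
  then obtain N where N: "\<forall>y\<in>F. Q y N" by auto
  obtain n where n: "Q x n" using insert.prems by auto
  have "Q y (max N n)" if "y \<in> insert x F" for y
  proof (cases "y = x")
    case True then show ?thesis using n assms(3)[of x n "max N n"] max.cobounded2[of n N] by blast
  next
    case False then have "Q y N" using N that by simp
    then show ?thesis using assms(3)[of y N "max N n"] max.cobounded1[of N n] by blast
  qed
  then have "\<forall>y\<in>insert x F. Q y (max N n)" by blast
  then show ?case by blast
qed

lemma conf_iter: "conf E D t \<Longrightarrow> t \<in> msgs E \<Longrightarrow> \<exists>n. iter E n D t"
proof -
  define P where "P = (\<lambda>D t. t \<in> msgs E \<longrightarrow> (\<exists>n. iter E n D t))"
  have "conf E \<le> P" unfolding conf_def
  proof (rule lfp_induct[OF step_mono])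
    show "conf_step E (inf (lfp (conf_step E)) P) \<le> P"
    proof (rule le_funI, rule le_funI, rule le_boolI)
      fix D t assume st: "conf_step E (inf (lfp (conf_step E)) P) D t"
      show "P D t" unfolding P_def
      proof
        assume tm: "t \<in> msgs E"
        show "\<exists>n. iter E n D t"
        proof (cases "t = genesis E")
          case True
          then have "iter E (Suc 0) D t" by (simp add: iter_Suc_iff)
          then show ?thesis by blast
        next
          case False
          with st obtain A where tx: "is_tx E t"
            and ins: "\<forall>u\<in>ins E t. P D (fst u)"
            and A: "A \<subseteq> D" "witness_with E (inf (lfp (conf_step E)) P) t A"
            unfolding conf_step_def by auto
          have fi: "finite (ins E t)" using tx_fin[OF exec tm tx] .
          obtain N1 where N1: "\<forall>u\<in>ins E t. iter E N1 D (fst u)"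
          proof -
            have "\<exists>N. \<forall>u\<in>ins E t. iter E N D (fst u)"
            proof (rule finite_bound[OF fi])
              fix u assume u: "u \<in> ins E t"
              have "fst u \<in> msgs E" using refs_ok[OF exec tm, of "fst u"] tx u
                unfolding refs_def is_tx_def by auto
              then show "\<exists>n. iter E n D (fst u)" using ins u unfolding P_def by auto
            qed (rule iter_mono_n)
            then show ?thesis using that by blast
          qed
          define S where "S = {x \<in> msgs E. x \<in> past E A \<and> is_tx E x \<and> inf (lfp (conf_step E)) P (past E A) x}"
          have fS: "finite S" unfolding S_def using fin_msgs[OF exec] by auto
          obtain N2 where N2: "\<forall>x\<in>S. iter E N2 (past E A) x"
          proof -
            have "\<exists>N. \<forall>x\<in>S. iter E N (past E A) x"
            proof (rule finite_bound[OF fS])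
              fix x assume "x \<in> S"
              then show "\<exists>n. iter E n (past E A) x" unfolding S_def P_def by auto
            qed (rule iter_mono_n)
            then show ?thesis using that by blast
          qed
          define N where "N = max N1 N2"
          have "witness_with E (iter E N) t A"
          proof (rule witness_mono[OF A(2)])
            fix x assume "x \<in> past E A" "x \<in> msgs E" "is_tx E x" "inf (lfp (conf_step E)) P (past E A) x"
            then have "x \<in> S" unfolding S_def by auto
            then show "iter E N (past E A) x" using N2 iter_mono_n[of N2 N] unfolding N_def by auto
          qed
          moreover have "\<forall>u\<in>ins E t. iter E N D (fst u)" using N1 iter_mono_n[of N1 N] unfolding N_def by auto
          ultimately have "iter E (Suc N) D t" using tx A(1) by (auto simp: iter_Suc_iff)
          then show ?thesis by blast
        qed
      qed
    qed
  qed
  moreover assume "conf E D t" "t \<in> msgs E"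
  ultimately show ?thesis unfolding P_def by (auto simp: le_fun_def)
qed

end


context
  fixes E :: "('m,'k) abc"
  assumes exec: "abc_execution E"
begin

lemma honest_chain_aux:
  "card {x \<in> msgs E. tlt E x a'} = k \<Longrightarrow> a \<in> msgs E \<Longrightarrow> a' \<in> msgs E \<Longrightarrow> is_ack E a \<Longrightarrow> is_ack E a' \<Longrightarrow>
   ackval E a = ackval E a' \<Longrightarrow> honest E (ackval E a') \<Longrightarrow> tle E a a' \<Longrightarrow> a \<in> past1 E a'"
proof (induction k arbitrary: a' rule: less_induct)
  case (less k)
  show ?case
  proof (cases "a = a'")
    case True then show ?thesis by (simp add: past1_self)
  next
    case False
    then have lt: "tlt E a a'" using less.prems(8) by (simp add: tle_def)
    have hp: "case prev E a' of
           None \<Rightarrow> \<not> (\<exists>b\<in>msgs E. is_ack E b \<and> ackval E b = ackval E a' \<and> tlt E b a')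
         | Some p \<Rightarrow> p \<in> msgs E \<and> tlt E p a' \<and>
             (\<forall>b\<in>msgs E. is_ack E b \<and> ackval E b = ackval E a' \<and> tlt E b a'
                 \<longrightarrow> b = p \<or> tlt E b p)"
      using honest_prev[OF exec less.prems(3) less.prems(5) less.prems(7)] .
    show ?thesis
    proof (cases "prev E a'")
      case None
      then have "\<not> (\<exists>b\<in>msgs E. is_ack E b \<and> ackval E b = ackval E a' \<and> tlt E b a')" using hp by simp
      then show ?thesis using less.prems(2,4,6) lt by blast
    next
      case (Some p)
      then have p: "p \<in> msgs E" "tlt E p a'" "a = p \<or> tlt E a p"
      proof -
        have "p \<in> msgs E \<and> tlt E p a' \<and>
             (\<forall>b\<in>msgs E. is_ack E b \<and> ackval E b = ackval E a' \<and> tlt E b a' \<longrightarrow> b = p \<or> tlt E b p)"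
          using hp Some by simp
        then show "p \<in> msgs E" "tlt E p a'" "a = p \<or> tlt E a p" using less.prems(2,4,6) lt by blast+
      qed
      have pa: "is_ack E p" "ackval E p = ackval E a'"
        using ack_prev[OF exec less.prems(3) less.prems(5) Some] by auto
      have pref: "p \<in> refs E a'" using Some less.prems(5) by (simp add: refs_def)
      show ?thesis
      proof (cases "a = p")
        case True then show ?thesis using past1_step[OF pref past1_self] by simp
      next
        case False
        define k' where "k' = card {x \<in> msgs E. tlt E x p}"
        have sub: "{x \<in> msgs E. tlt E x p} \<subset> {x \<in> msgs E. tlt E x a'}"
        proof
          show "{x \<in> msgs E. tlt E x p} \<subseteq> {x \<in> msgs E. tlt E x a'}"
          proof
            fix x assume "x \<in> {x \<in> msgs E. tlt E x p}"
            then have "x \<in> msgs E" "tlt E x p" by auto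
            then show "x \<in> {x \<in> msgs E. tlt E x a'}" using trans[OF exec _ p(1) less.prems(3)] p(2) by blast
          qed
          have "p \<in> {x \<in> msgs E. tlt E x a'}" "p \<notin> {x \<in> msgs E. tlt E x p}" using p irr[OF exec p(1)] by auto
          then show "{x \<in> msgs E. tlt E x p} \<noteq> {x \<in> msgs E. tlt E x a'}" by blast
        qed
        have "k' < k" unfolding k'_def less.prems(1)[symmetric]
          by (rule psubset_card_mono) (use fin_msgs[OF exec] sub in auto)
        moreover have "tle E a p" using p(3) False by (simp add: tle_def)
        moreover have e1: "ackval E a = ackval E p" using pa(2) less.prems(6) by simp
        moreover have e2: "honest E (ackval E p)" using pa(2) less.prems(7) by simp
        ultimately have "a \<in> past1 E p"
          using less.IH[of k' p, OF _ k'_def[symmetric] less.prems(2) p(1) less.prems(4) pa(1)] by blast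
        then show ?thesis using past1_step[OF pref] by simp
      qed
    qed
  qed
qed

lemma honest_chain:
  "a \<in> msgs E \<Longrightarrow> a' \<in> msgs E \<Longrightarrow> is_ack E a \<Longrightarrow> is_ack E a' \<Longrightarrow>
   ackval E a = ackval E a' \<Longrightarrow> honest E (ackval E a') \<Longrightarrow> tle E a a' \<Longrightarrow> a \<in> past1 E a'"
  by (rule honest_chain_aux[OF refl])

lemma honest_compare:
  assumes "v \<in> signers E c B" "v \<in> signers E d B'" "honest E v"
    "B \<subseteq> msgs E" "B' \<subseteq> msgs E" "\<forall>a\<in>B. is_ack E a" "\<forall>a\<in>B'. is_ack E a"
  shows "c \<in> past E B' \<or> d \<in> past E B"
proof -
  obtain a where a: "a \<in> B" "c \<in> signs E a" "ackval E a = v" using assms(1) unfolding signers_def by auto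
  obtain a' where a': "a' \<in> B'" "d \<in> signs E a'" "ackval E a' = v" using assms(2) unfolding signers_def by auto
  have am: "a \<in> msgs E" "a' \<in> msgs E" "is_ack E a" "is_ack E a'"
    using a(1) a'(1) assms(4-7) by (auto simp del: is_tx_def)
  have "c \<in> refs E a" using a(2) am(3) by (simp add: refs_def)
  then have cp: "c \<in> past1 E a" by (rule past1_step[OF _ past1_self])
  have "d \<in> refs E a'" using a'(2) am(4) by (simp add: refs_def)
  then have dp: "d \<in> past1 E a'" by (rule past1_step[OF _ past1_self])
  have eq: "ackval E a = ackval E a'" using a(3) a'(3) by simp
  have h: "honest E (ackval E a')" and h': "honest E (ackval E a)" using a(3) a'(3) assms(3) by simp_all
  consider "tle E a a'" | "tle E a' a" using total[OF exec am(1,2)] unfolding tle_def by auto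
  then show ?thesis
  proof cases
    case 1
    have "a \<in> past1 E a'" using honest_chain[OF am eq h 1] .
    then have "c \<in> past1 E a'" by (rule past1_trans[OF _ cp])
    then have "c \<in> past E B'" using a'(1) unfolding past_iff by blast
    then show ?thesis ..
  next
    case 2
    have "a' \<in> past1 E a" using honest_chain[OF am(2,1,4,3) eq[symmetric] h' 2] .
    then have "d \<in> past1 E a" by (rule past1_trans[OF _ dp])
    then have "d \<in> past E B" using a(1) unfolding past_iff by blast
    then show ?thesis ..
  qed
qed

end


definition Cf :: "('m,'k) abc \<Rightarrow> nat \<Rightarrow> 'm set \<Rightarrow> 'm set" where
  "Cf E n Y = {x \<in> Y. is_tx E x \<and> iter E n Y x}"

definition Ou :: "('m,'k) abc \<Rightarrow> nat \<Rightarrow> 'm set \<Rightarrow> ('m \<times> nat) set" where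
  "Ou E n Y = {u. fst u \<in> Y \<and> fst u \<in> msgs E \<and> is_tx E (fst u) \<and> iter E n Y (fst u)
              \<and> snd u < length (outs E (fst u)) \<and> unspent E Y u}"

definition ih :: "('m,'k) abc \<Rightarrow> 'm \<Rightarrow> real" where
  "ih E t = (\<Sum>u | u \<in> ins E t \<and> honest E (deleg E u). oval E u)"

context
  fixes E :: "('m,'k) abc"
  assumes exec: "abc_execution E"
begin

lemma Ou_sub: "Ou E n Y \<subseteq> outset E"
  unfolding Ou_def outset_def by auto

lemma stake_sum:
  assumes "finite S"
  shows "(\<Sum>v\<in>S. stake_with E (iter E n) Y v) = (\<Sum>u\<in>{u \<in> Ou E n Y. deleg E u \<in> S}. oval E u)"
proof -
  have fT: "finite {u \<in> Ou E n Y. deleg E u \<in> S}"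
    using finite_subset[OF Ou_sub outset_fin[OF exec]] by auto
  have "(\<Sum>v\<in>S. sum (oval E) {x. x \<in> {u \<in> Ou E n Y. deleg E u \<in> S} \<and> deleg E x = v})
        = sum (oval E) {u \<in> Ou E n Y. deleg E u \<in> S}"
    by (rule sum.group[OF fT assms]) auto
  moreover have "stake_with E (iter E n) Y v = sum (oval E) {x. x \<in> {u \<in> Ou E n Y. deleg E u \<in> S} \<and> deleg E x = v}"
    if "v \<in> S" for v
    unfolding stake_with_def Ou_def using that by (intro sum.cong) auto
  ultimately show ?thesis by simp
qed

lemma sum_outs: "x \<in> msgs E \<Longrightarrow> (\<Sum>i<length (outs E x). oval E (x, i)) = (\<Sum>p\<leftarrow>outs E x. fst p)"
  unfolding oval_def by (simp add: sum_list_sum_nth atLeast0LessThan)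

lemma money:
  fixes Y Y' :: "'m set" and n m :: nat and S S' :: "'k set"
  assumes Ym: "Y \<subseteq> msgs E" "Y' \<subseteq> msgs E"
    and Yc: "\<And>y z. y \<in> Y \<Longrightarrow> z \<in> refs E y \<Longrightarrow> z \<in> Y"
    and Yc': "\<And>y z. y \<in> Y' \<Longrightarrow> z \<in> refs E y \<Longrightarrow> z \<in> Y'"
    and cf: "\<And>x y. x \<in> Cf E n Y \<union> Cf E m Y' \<Longrightarrow> y \<in> Cf E n Y \<union> Cf E m Y' \<Longrightarrow> x \<noteq> y \<Longrightarrow> ins E x \<inter> ins E y = {}"
    and cr1: "\<And>x. x \<in> Cf E n Y \<Longrightarrow> x \<noteq> genesis E \<Longrightarrow> x \<in> Y'"
    and cr2: "\<And>x. x \<in> Cf E m Y' \<Longrightarrow> x \<noteq> genesis E \<Longrightarrow> x \<in> Y"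
    and SS: "\<And>v. v \<in> S \<Longrightarrow> v \<in> S' \<Longrightarrow> \<not> honest E v"
  shows "(\<Sum>u\<in>{u \<in> Ou E n Y. deleg E u \<in> S}. oval E u) + (\<Sum>u\<in>{u \<in> Ou E m Y'. deleg E u \<in> S'}. oval E u)
     \<le> totalM E + (genesis_adv E + (\<Sum>x\<in>{x \<in> Cf E n Y \<union> Cf E m Y'. x \<noteq> genesis E \<and> \<not> honest E (txval E x)}. ih E x))"
proof -
  define T where "T = Cf E n Y \<union> Cf E m Y'"
  define Out where "Out = (SIGMA x:T. {..<length (outs E x)})"
  define Cons where "Cons = (\<Union>x\<in>T. ins E x)"
  have Tm: "T \<subseteq> msgs E" unfolding T_def Cf_def using Ym by auto
  have fT: "finite T" using finite_subset[OF Tm fin_msgs[OF exec]] .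
  have Ttx: "is_tx E x" if "x \<in> T" for x using that unfolding T_def Cf_def by auto
  have fOut: "finite Out" unfolding Out_def using fT by auto
  have finsT: "finite (ins E x)" if "x \<in> T" for x using tx_fin[OF exec] Tm Ttx that by auto
  have nonneg: "oval E u \<ge> 0" if "u \<in> Out" for u
    using that oval_nonneg[OF exec] Tm Ttx unfolding Out_def by auto
  have inOut_gen: "u \<in> Out" if x: "x \<in> Cf E k Z" and u: "u \<in> ins E x" and Zc: "\<And>y z. y \<in> Z \<Longrightarrow> z \<in> refs E y \<Longrightarrow> z \<in> Z"
    and Zm: "Z \<subseteq> msgs E" and sub: "Cf E k Z \<subseteq> T" for x u k Z
  proof -
    have xZ: "x \<in> Z" "is_tx E x" "iter E k Z x" using x unfolding Cf_def by auto
    have xg: "x \<noteq> genesis E" using u gen_ins[OF exec] by auto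
    obtain k' where k: "k = Suc k'" using xZ(3) by (cases k) auto
    have "iter E k' Z (fst u)" using xZ(3) xg u unfolding k iter_Suc_iff by auto
    then have it: "iter E k Z (fst u)" using iter_mono_n[OF exec, of k' k] k by auto
    have "fst u \<in> refs E x" using u xZ(2) unfolding refs_def is_tx_def by auto
    then have fz: "fst u \<in> Z" using Zc xZ(1) by blast
    have tx: "is_tx E (fst u) \<and> snd u < length (outs E (fst u))"
      using tx_in[OF exec _ xZ(2) u] xZ(1) Zm by auto
    then have "fst u \<in> Cf E k Z" using fz it unfolding Cf_def by auto
    then have "fst u \<in> T" using sub by auto
    then show ?thesis unfolding Out_def using tx by (cases u) auto
  qed
  have inOut: "u \<in> Out" if "x \<in> T" "u \<in> ins E x" for x u
  proof (cases "x \<in> Cf E n Y")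
    case True
    show ?thesis by (rule inOut_gen[OF True that(2) Yc Ym(1)]) (auto simp: T_def)
  next
    case False
    then have "x \<in> Cf E m Y'" using that(1) unfolding T_def by auto
    show ?thesis by (rule inOut_gen[OF \<open>x \<in> Cf E m Y'\<close> that(2) Yc' Ym(2)]) (auto simp: T_def)
  qed
  have ConsOut: "Cons \<subseteq> Out" unfolding Cons_def using inOut by auto
  have OuOC1: "Ou E n Y \<subseteq> Out - Cons"
  proof
    fix u assume u: "u \<in> Ou E n Y"
    then have "fst u \<in> Cf E n Y" unfolding Ou_def Cf_def by auto
    then have "u \<in> Out" using u unfolding Out_def T_def Ou_def by (cases u) auto
    moreover have "u \<notin> Cons"
    proof
      assume "u \<in> Cons"
      then obtain x where x: "x \<in> T" "u \<in> ins E x" unfolding Cons_def by auto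
      have xg: "x \<noteq> genesis E" using x(2) gen_ins[OF exec] by auto
      have "x \<in> Y" using x xg cr2 unfolding T_def Cf_def by auto
      then show False using u x Ttx unfolding Ou_def unspent_def by auto
    qed
    ultimately show "u \<in> Out - Cons" by simp
  qed
  have OuOC2: "Ou E m Y' \<subseteq> Out - Cons"
  proof
    fix u assume u: "u \<in> Ou E m Y'"
    then have "fst u \<in> Cf E m Y'" unfolding Ou_def Cf_def by auto
    then have "u \<in> Out" using u unfolding Out_def T_def Ou_def by (cases u) auto
    moreover have "u \<notin> Cons"
    proof
      assume "u \<in> Cons"
      then obtain x where x: "x \<in> T" "u \<in> ins E x" unfolding Cons_def by auto
      have xg: "x \<noteq> genesis E" using x(2) gen_ins[OF exec] by auto
      have "x \<in> Y'" using x xg cr1 unfolding T_def Cf_def by auto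
      then show False using u x Ttx unfolding Ou_def unspent_def by auto
    qed
    ultimately show "u \<in> Out - Cons" by simp
  qed
  define P where "P = {u \<in> Ou E n Y. deleg E u \<in> S}"
  define P' where "P' = {u \<in> Ou E m Y'. deleg E u \<in> S'}"
  define AdvU where "AdvU = {u \<in> Out - Cons. \<not> honest E (deleg E u)}"
  have PU: "P \<union> P' \<subseteq> Out - Cons" unfolding P_def P'_def using OuOC1 OuOC2 by auto
  have PI: "P \<inter> P' \<subseteq> AdvU" unfolding P_def P'_def AdvU_def using OuOC1 SS by auto
  have "P \<subseteq> Out" "P' \<subseteq> Out" using PU by auto
  then have fP: "finite P" "finite P'" using fOut finite_subset by auto
  have "sum (oval E) P + sum (oval E) P' = sum (oval E) (P \<union> P') + sum (oval E) (P \<inter> P')"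
    using sum.union_inter[OF fP, of "oval E"] by simp
  also have "\<dots> \<le> sum (oval E) (Out - Cons) + sum (oval E) AdvU"
  proof (rule add_mono)
    show "sum (oval E) (P \<union> P') \<le> sum (oval E) (Out - Cons)"
      by (rule sum_mono2) (use fOut PU nonneg in auto)
    show "sum (oval E) (P \<inter> P') \<le> sum (oval E) AdvU"
      by (rule sum_mono2) (use fOut PI nonneg in \<open>auto simp: AdvU_def\<close>)
  qed
  finally have step1: "sum (oval E) P + sum (oval E) P' \<le> sum (oval E) (Out - Cons) + sum (oval E) AdvU" .
  have disj: "\<forall>i\<in>T. \<forall>j\<in>T. i \<noteq> j \<longrightarrow> ins E i \<inter> ins E j = {}" using cf unfolding T_def by blast
  have sOut: "sum (oval E) Out = (\<Sum>x\<in>T. \<Sum>i<length (outs E x). oval E (x, i))"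
  proof -
    have "(\<Sum>x\<in>T. \<Sum>i<length (outs E x). oval E (x, i)) = sum (\<lambda>(x,i). oval E (x,i)) Out"
      unfolding Out_def by (rule sum.Sigma) (use fT in auto)
    moreover have "(\<lambda>(x,i). oval E (x,i)) = oval E" by (rule ext) auto
    ultimately show ?thesis by simp
  qed
  have sCons: "sum (oval E) Cons = (\<Sum>x\<in>T. \<Sum>u\<in>ins E x. oval E u)"
    unfolding Cons_def by (rule sum.UNION_disjoint) (use fT finsT disj in auto)
  have "sum (oval E) (Out - Cons) = (\<Sum>x\<in>T. (\<Sum>i<length (outs E x). oval E (x, i)) - (\<Sum>u\<in>ins E x. oval E u))"
    by (simp only: sum_diff[OF fOut ConsOut] sOut sCons sum_subtractf)
  also have "\<dots> = (\<Sum>x\<in>T. if x = genesis E then totalM E else 0)"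
  proof (rule sum.cong)
    fix x assume x: "x \<in> T"
    show "(\<Sum>i<length (outs E x). oval E (x, i)) - (\<Sum>u\<in>ins E x. oval E u) = (if x = genesis E then totalM E else 0)"
    proof (cases "x = genesis E")
      case True then show ?thesis using sum_outs gen_sum[OF exec] gen_ins[OF exec] gen_in[OF exec] by simp
    next
      case False then show ?thesis using sum_outs tx_cons[OF exec] x Tm Ttx by auto
    qed
  qed simp
  also have "\<dots> \<le> totalM E" using fT M_pos[OF exec] by simp
  finally have step2: "sum (oval E) (Out - Cons) \<le> totalM E" .
  define OA where "OA = (SIGMA x:T. {i. i < length (outs E x) \<and> \<not> honest E (deleg E (x, i))})"
  define CA where "CA = (\<Union>x\<in>T. {u. u \<in> ins E x \<and> \<not> honest E (deleg E u)})"
  have AdvU_eq: "AdvU = OA - CA" unfolding AdvU_def OA_def CA_def Out_def Cons_def by auto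
  have CAOA: "CA \<subseteq> OA" unfolding CA_def OA_def using inOut unfolding Out_def by fastforce
  have fOA: "finite OA" using fOut unfolding OA_def Out_def by (rule finite_subset[rotated]) auto
  have sOA: "sum (oval E) OA = (\<Sum>x\<in>T. \<Sum>i\<in>{i. i < length (outs E x) \<and> \<not> honest E (deleg E (x, i))}. oval E (x, i))"
  proof -
    have "(\<Sum>x\<in>T. \<Sum>i\<in>{i. i < length (outs E x) \<and> \<not> honest E (deleg E (x, i))}. oval E (x, i)) = sum (\<lambda>(x,i). oval E (x,i)) OA"
      unfolding OA_def by (rule sum.Sigma) (use fT in auto)
    moreover have "(\<lambda>(x,i). oval E (x,i)) = oval E" by (rule ext) auto
    ultimately show ?thesis by simp
  qed
  have sCA: "sum (oval E) CA = (\<Sum>x\<in>T. \<Sum>u\<in>{u. u \<in> ins E x \<and> \<not> honest E (deleg E u)}. oval E u)"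
    unfolding CA_def by (rule sum.UNION_disjoint) (use fT finsT disj in auto)
  define g where "g = (\<lambda>x. (if x = genesis E then genesis_adv E else 0) +
       (if x \<noteq> genesis E \<and> \<not> honest E (txval E x) then ih E x else 0))"
  have "sum (oval E) AdvU = (\<Sum>x\<in>T. (\<Sum>i\<in>{i. i < length (outs E x) \<and> \<not> honest E (deleg E (x, i))}. oval E (x, i))
                      - (\<Sum>u\<in>{u. u \<in> ins E x \<and> \<not> honest E (deleg E u)}. oval E u))"
    unfolding AdvU_eq by (simp only: sum_diff[OF fOA CAOA] sOA sCA sum_subtractf)
  also have "\<dots> \<le> (\<Sum>x\<in>T. g x)"
  proof (rule sum_mono)
    fix x assume x: "x \<in> T"
    have xm: "x \<in> msgs E" "is_tx E x" using x Tm Ttx by auto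
    have ia0: "(\<Sum>u\<in>{u. u \<in> ins E x \<and> \<not> honest E (deleg E u)}. oval E u) \<ge> 0"
    proof (rule sum_nonneg)
      fix u assume "u \<in> {u. u \<in> ins E x \<and> \<not> honest E (deleg E u)}"
      then have u: "u \<in> ins E x" by simp
      have "fst u \<in> refs E x" using u xm(2) by (auto simp: refs_def is_tx_def)
      then have "fst u \<in> msgs E" using refs_ok[OF exec xm(1)] by blast
      then show "oval E u \<ge> 0" using tx_in[OF exec xm u] oval_nonneg[OF exec] by blast
    qed
    show "(\<Sum>i\<in>{i. i < length (outs E x) \<and> \<not> honest E (deleg E (x, i))}. oval E (x, i))
           - (\<Sum>u\<in>{u. u \<in> ins E x \<and> \<not> honest E (deleg E u)}. oval E u) \<le> g x"
    proof (cases "x = genesis E")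
      case True
      then show ?thesis unfolding g_def genesis_adv_def using gen_ins[OF exec] by (simp add: deleg_def)
    next
      case xg: False
      have dl: "deleg E (x, i) = txval E x" for i using xg by (simp add: deleg_def)
      show ?thesis
      proof (cases "honest E (txval E x)")
        case True
        then show ?thesis unfolding g_def dl using xg ia0 by simp
      next
        case False
        have fi: "finite (ins E x)" using finsT x .
        have "(\<Sum>i\<in>{i. i < length (outs E x) \<and> \<not> honest E (deleg E (x, i))}. oval E (x, i))
              = (\<Sum>i<length (outs E x). oval E (x, i))" unfolding dl using False by (simp add: lessThan_def)
        also have "\<dots> = (\<Sum>u\<in>ins E x. oval E u)" using sum_outs[OF xm(1)] tx_cons[OF exec xm xg] by simp
        also have "\<dots> = (\<Sum>u\<in>{u. u \<in> ins E x \<and> \<not> honest E (deleg E u)}. oval E u) + ih E x"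
        proof -
          have eq: "ins E x = {u. u \<in> ins E x \<and> \<not> honest E (deleg E u)} \<union> {u. u \<in> ins E x \<and> honest E (deleg E u)}" by auto
          have "sum (oval E) ({u. u \<in> ins E x \<and> \<not> honest E (deleg E u)} \<union> {u. u \<in> ins E x \<and> honest E (deleg E u)})
             = sum (oval E) {u. u \<in> ins E x \<and> \<not> honest E (deleg E u)} + sum (oval E) {u. u \<in> ins E x \<and> honest E (deleg E u)}"
            by (rule sum.union_disjoint) (use fi in auto)
          then show ?thesis unfolding ih_def using eq by simp
        qed
        finally show ?thesis unfolding g_def using xg False by simp
      qed
    qed
  qed
  also have "\<dots> \<le> genesis_adv E + (\<Sum>x\<in>{x \<in> T. x \<noteq> genesis E \<and> \<not> honest E (txval E x)}. ih E x)"
  proof -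
    have "(\<Sum>x\<in>T. g x) = (\<Sum>x\<in>T. if x = genesis E then genesis_adv E else 0) +
        (\<Sum>x\<in>T. if x \<noteq> genesis E \<and> \<not> honest E (txval E x) then ih E x else 0)"
      unfolding g_def by (rule sum.distrib)
    also have "\<dots> = (if genesis E \<in> T then genesis_adv E else 0) + (\<Sum>x\<in>{x \<in> T. x \<noteq> genesis E \<and> \<not> honest E (txval E x)}. ih E x)"
      using fT by (simp add: sum.inter_filter)
    also have "\<dots> \<le> genesis_adv E + (\<Sum>x\<in>{x \<in> T. x \<noteq> genesis E \<and> \<not> honest E (txval E x)}. ih E x)"
      using gadv_nonneg[OF exec] by simp
    finally show ?thesis .
  qed
  finally have step3: "sum (oval E) AdvU \<le> genesis_adv E + (\<Sum>x\<in>{x \<in> T. x \<noteq> genesis E \<and> \<not> honest E (txval E x)}. ih E x)" .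
  show ?thesis using step1 step2 step3 unfolding P_def P'_def T_def by linarith
qed

end


lemma pair_induct:
  fixes P :: "nat \<Rightarrow> nat \<Rightarrow> bool" and n m :: nat
  assumes step: "\<And>n m. (\<And>n' m'. max n' m' < max n m \<or> (max n' m' = max n m \<and> n' + m' < n + m) \<Longrightarrow> P n' m') \<Longrightarrow> P n m"
  shows "P n m"
proof -
  have "\<forall>n m. max n m = K \<longrightarrow> n + m = L \<longrightarrow> P n m" for K L :: nat
  proof (induction K arbitrary: L rule: less_induct)
    case (less K)
    note outer = less.IH
    show ?case
    proof (induction L rule: less_induct)
      case (less L)
      show ?case
      proof (intro allI impI)
        fix n m assume nm: "max n m = K" "n + m = L"
        show "P n m"
        proof (rule step)
          fix n' m' assume "max n' m' < max n m \<or> (max n' m' = max n m \<and> n' + m' < n + m)"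
          then show "P n' m'"
          proof
            assume "max n' m' < max n m"
            then show ?thesis using outer[of "max n' m'" "n' + m'"] nm by auto
          next
            assume "max n' m' = max n m \<and> n' + m' < n + m"
            then show ?thesis using less.IH[of "n' + m'"] nm by auto
          qed
        qed
      qed
    qed
  qed
  then show ?thesis by blast
qed

definition good :: "('m,'k) abc \<Rightarrow> 'm \<Rightarrow> nat \<Rightarrow> 'm \<Rightarrow> 'm set \<Rightarrow> bool" where
  "good E a0 n c B \<longleftrightarrow> B \<subseteq> msgs E \<and> witness_with E (iter E n) c B \<and>
     (\<forall>x\<in>Cf E n (past E B). x \<noteq> genesis E \<longrightarrow> \<not> honest E (txval E x) \<longrightarrow> tlt E x a0)"

context
  fixes E :: "('m,'k) abc"
  assumes exec: "abc_execution E"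
begin

lemma witness_ne: "witness_with E C t B \<Longrightarrow> B \<noteq> {}"
  using M_pos[OF exec] unfolding witness_with_def signers_def by auto

lemma ih_nonneg: assumes "x \<in> msgs E" "is_tx E x" shows "ih E x \<ge> 0"
  unfolding ih_def
proof (rule sum_nonneg)
  fix u assume "u \<in> {u. u \<in> ins E x \<and> honest E (deleg E u)}"
  then have u: "u \<in> ins E x" by simp
  have "fst u \<in> refs E x" using u assms(2) by (auto simp: refs_def is_tx_def)
  then have "fst u \<in> msgs E" using refs_ok[OF exec assms(1)] by blast
  then show "oval E u \<ge> 0" using tx_in[OF exec assms u] oval_nonneg[OF exec] by blast
qed

lemma sub_witness:
  assumes "x \<in> Cf E n Y" "x \<noteq> genesis E"
  shows "\<exists>k B1. n = Suc k \<and> B1 \<subseteq> Y \<and> witness_with E (iter E k) x B1"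
proof -
  have it: "iter E n Y x" using assms(1) unfolding Cf_def by auto
  then obtain k where k: "n = Suc k" by (cases n) auto
  then show ?thesis using it assms(2) unfolding k iter_Suc_iff by blast
qed

lemma good_sub:
  assumes g: "good E a0 n c B" and B1: "B1 \<subseteq> past E B" and w: "witness_with E (iter E k) x B1" and kn: "k \<le> n"
  shows "good E a0 k x B1"
proof -
  have Bm: "B \<subseteq> msgs E" using g unfolding good_def by auto
  have "B1 \<subseteq> msgs E" using B1 past_msgs[OF exec Bm] by auto
  moreover have "\<forall>y\<in>Cf E k (past E B1). y \<noteq> genesis E \<longrightarrow> \<not> honest E (txval E y) \<longrightarrow> tlt E y a0"
  proof (intro ballI impI)
    fix y assume y: "y \<in> Cf E k (past E B1)" "y \<noteq> genesis E" "\<not> honest E (txval E y)"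
    have sub: "past E B1 \<subseteq> past E B" by (rule past_mono[OF B1])
    have "iter E k (past E B) y" using y(1) iter_mono_D[OF exec _ sub] unfolding Cf_def by auto
    then have "iter E n (past E B) y" using iter_mono_n[OF exec kn] by auto
    then have "y \<in> Cf E n (past E B)" using y(1) sub unfolding Cf_def by auto
    then show "tlt E y a0" using g y unfolding good_def by auto
  qed
  ultimately show ?thesis using w unfolding good_def by auto
qed

lemma adv_bound:
  assumes a0: "a0 \<in> msgs E"
    and first: "\<And>t A. t \<in> msgs E \<Longrightarrow> is_tx E t \<Longrightarrow> t \<noteq> genesis E \<Longrightarrow>
                  conf E (msgs E) t \<Longrightarrow> A \<subseteq> msgs E \<Longrightarrow> witnessing E t A \<Longrightarrow>
                  tle E a0 (tmax E A)"
    and Tm: "T \<subseteq> msgs E" "\<And>x. x \<in> T \<Longrightarrow> is_tx E x"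
    and early: "\<And>x. x \<in> T \<Longrightarrow> x \<noteq> genesis E \<Longrightarrow> \<not> honest E (txval E x) \<Longrightarrow> tlt E x a0"
  shows "genesis_adv E + (\<Sum>x\<in>{x \<in> T. x \<noteq> genesis E \<and> \<not> honest E (txval E x)}. ih E x) < totalM E / 3"
proof (cases "{x \<in> T. x \<noteq> genesis E \<and> \<not> honest E (txval E x)} = {}")
  case True
  then show ?thesis using gadv_lt[OF exec] by (simp only: True sum.empty add_0_right)
next
  case False
  define X where "X = {x \<in> T. x \<noteq> genesis E \<and> \<not> honest E (txval E x)}"
  have Xm: "X \<subseteq> msgs E" using Tm unfolding X_def by auto
  have fX: "finite X" using finite_subset[OF Xm fin_msgs[OF exec]] .
  define \<tau> where "\<tau> = tmax E X"
  have tp: "\<tau> \<in> X" "\<forall>a\<in>X. tle E a \<tau>" using tmax_prop[OF exec fX _ Xm] False unfolding \<tau>_def X_def by auto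
  have \<tau>m: "\<tau> \<in> msgs E" using tp Xm by auto
  have \<tau>a0: "tlt E \<tau> a0" using tp(1) early unfolding X_def by auto
  have prefm: "prefix E \<tau> \<subseteq> msgs E" unfolding prefix_def by auto
  have empty: "{t. t \<in> msgs E \<and> is_tx E t \<and> t \<noteq> genesis E \<and> honest E (txval E t) \<and> conf E (prefix E \<tau>) t} = {}"
  proof (rule ccontr)
    assume "{t. t \<in> msgs E \<and> is_tx E t \<and> t \<noteq> genesis E \<and> honest E (txval E t) \<and> conf E (prefix E \<tau>) t} \<noteq> {}"
    then obtain t where "t \<in> {t. t \<in> msgs E \<and> is_tx E t \<and> t \<noteq> genesis E \<and> honest E (txval E t) \<and> conf E (prefix E \<tau>) t}" by blast
    then have t: "t \<in> msgs E" "is_tx E t" "t \<noteq> genesis E" "conf E (prefix E \<tau>) t" by simp_all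
    obtain n where n: "iter E n (prefix E \<tau>) t" using conf_iter[OF exec t(4,1)] by auto
    then obtain k where k: "n = Suc k" by (cases n) auto
    have "iter E (Suc k) (prefix E \<tau>) t" using n k by simp
    then have "\<exists>B. B \<subseteq> prefix E \<tau> \<and> witness_with E (iter E k) t B"
      using t(3) unfolding iter_Suc_iff by simp
    then obtain B where B: "B \<subseteq> prefix E \<tau>" "witness_with E (iter E k) t B" by blast
    have wB: "witnessing E t B" unfolding witnessing_def
      by (rule witness_mono[OF exec B(2)]) (use iter_conf[OF exec] in auto)
    have "iter E n (msgs E) t" using iter_mono_D[OF exec n prefm] .
    then have cm: "conf E (msgs E) t" using iter_conf[OF exec] by auto
    have Bm: "B \<subseteq> msgs E" using B(1) prefm by auto
    have ta: "tle E a0 (tmax E B)" using first[OF t(1-3) cm Bm wB] .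
    have fB: "finite B" using B(2) unfolding witness_with_def by auto
    have "tmax E B \<in> B" using tmax_prop[OF exec fB witness_ne[OF B(2)] Bm] by auto
    then have "tle E (tmax E B) \<tau>" "tmax E B \<in> msgs E" using B(1) unfolding prefix_def by auto
    then have "tle E a0 \<tau>" using tle_trans[OF exec a0 _ \<tau>m ta] by auto
    then have "a0 = \<tau> \<or> tlt E a0 \<tau>" unfolding tle_def .
    then have "tlt E \<tau> \<tau>"
    proof
      assume "a0 = \<tau>" then show ?thesis using \<tau>a0 by simp
    next
      assume "tlt E a0 \<tau>" then show ?thesis using trans[OF exec \<tau>m a0 \<tau>m \<tau>a0] by simp
    qed
    then show False using irr[OF exec \<tau>m] by simp
  qed
  have "(\<Sum>x\<in>X. ih E x) \<le> (\<Sum>t | t \<in> msgs E \<and> is_tx E t \<and> t \<noteq> genesis E \<and> \<not> honest E (txval E t)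
              \<and> tle E t \<tau>. ih E t)"
  proof (rule sum_mono2)
    show "finite {t. t \<in> msgs E \<and> is_tx E t \<and> t \<noteq> genesis E \<and> \<not> honest E (txval E t) \<and> tle E t \<tau>}"
      using fin_msgs[OF exec] by auto
    show "X \<subseteq> {t. t \<in> msgs E \<and> is_tx E t \<and> t \<noteq> genesis E \<and> \<not> honest E (txval E t) \<and> tle E t \<tau>}"
      using tp(2) Xm Tm(2) unfolding X_def by auto
  qed (use ih_nonneg in auto)
  then have "genesis_adv E + (\<Sum>x\<in>X. ih E x) \<le> adv_count E \<tau>"
    unfolding adv_count_def empty ih_def by simp
  then show ?thesis using advc_lt[OF exec \<tau>m] unfolding X_def by simp
qed

end


context
  fixes E :: "('m,'k) abc"
  assumes exec: "abc_execution E"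
begin

lemma GEN:
  assumes a0: "a0 \<in> msgs E"
    and first: "\<And>t A. t \<in> msgs E \<Longrightarrow> is_tx E t \<Longrightarrow> t \<noteq> genesis E \<Longrightarrow>
                  conf E (msgs E) t \<Longrightarrow> A \<subseteq> msgs E \<Longrightarrow> witnessing E t A \<Longrightarrow>
                  tle E a0 (tmax E A)"
  shows "good E a0 n c B \<Longrightarrow> good E a0 m d B' \<Longrightarrow> c \<in> past E B' \<or> d \<in> past E B"
proof -
  define Q where "Q = (\<lambda>n m. \<forall>c B d B'. good E a0 n c B \<longrightarrow> good E a0 m d B' \<longrightarrow> c \<in> past E B' \<or> d \<in> past E B)"
  have "Q n m"
  proof (rule pair_induct)
    fix n m :: nat
    assume IH: "\<And>n' m'. max n' m' < max n m \<or> (max n' m' = max n m \<and> n' + m' < n + m) \<Longrightarrow> Q n' m'"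
    show "Q n m" unfolding Q_def
    proof (intro allI impI)
      fix c B d B' assume g: "good E a0 n c B" and g': "good E a0 m d B'"
      show "c \<in> past E B' \<or> d \<in> past E B"
      proof (rule ccontr)
        assume "\<not> (c \<in> past E B' \<or> d \<in> past E B)"
        then have nc: "c \<notin> past E B'" and nd: "d \<notin> past E B" by auto
        define Y where "Y = past E B"
        define Y' where "Y' = past E B'"
        have Bm: "B \<subseteq> msgs E" and wit: "witness_with E (iter E n) c B" using g unfolding good_def by auto
        have B'm: "B' \<subseteq> msgs E" and wit': "witness_with E (iter E m) d B'" using g' unfolding good_def by auto
        have Ym: "Y \<subseteq> msgs E" "Y' \<subseteq> msgs E" unfolding Y_def Y'_def using past_msgs[OF exec] Bm B'm by auto
        have cr1: "x \<in> Y'" if x: "x \<in> Cf E n Y" "x \<noteq> genesis E" for x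
        proof -
          obtain k B1 where k: "n = Suc k" "B1 \<subseteq> Y" "witness_with E (iter E k) x B1"
            using sub_witness[OF exec x] by blast
          have g1: "good E a0 k x B1" using good_sub[OF exec g k(2)[unfolded Y_def] k(3)] k(1) by simp
          have "max k m < max n m \<or> (max k m = max n m \<and> k + m < n + m)" using k(1) by auto
          then have "Q k m" by (rule IH)
          then have "x \<in> past E B' \<or> d \<in> past E B1" unfolding Q_def using g1 g' by blast
          moreover have "past E B1 \<subseteq> past E B" using past_mono k(2) unfolding Y_def by blast
          ultimately show ?thesis using nd unfolding Y'_def by blast
        qed
        have cr2: "x \<in> Y" if x: "x \<in> Cf E m Y'" "x \<noteq> genesis E" for x
        proof -
          obtain k B1 where k: "m = Suc k" "B1 \<subseteq> Y'" "witness_with E (iter E k) x B1"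
            using sub_witness[OF exec x] by blast
          have g1: "good E a0 k x B1" using good_sub[OF exec g' k(2)[unfolded Y'_def] k(3)] k(1) by simp
          have "max n k < max n m \<or> (max n k = max n m \<and> n + k < n + m)" using k(1) by auto
          then have "Q n k" by (rule IH)
          then have "c \<in> past E B1 \<or> x \<in> past E B" unfolding Q_def using g g1 by blast
          moreover have "past E B1 \<subseteq> past E B'" using past_mono k(2) unfolding Y'_def by blast
          ultimately show ?thesis using nc unfolding Y_def by blast
        qed
        have subT: "\<exists>k B1. k < max n m \<and> good E a0 k x B1" if x: "x \<in> Cf E n Y \<union> Cf E m Y'" "x \<noteq> genesis E" for x
        proof (cases "x \<in> Cf E n Y")
          case True
          obtain k B1 where k: "n = Suc k" "B1 \<subseteq> Y" "witness_with E (iter E k) x B1"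
            using sub_witness[OF exec True x(2)] by blast
          have g1: "good E a0 k x B1" using good_sub[OF exec g k(2)[unfolded Y_def] k(3)] k(1) by simp
          then show ?thesis using k(1) by (intro exI[of _ k] exI[of _ B1]) auto
        next
          case False
          then have xx: "x \<in> Cf E m Y'" using x(1) by blast
          obtain k B1 where k: "m = Suc k" "B1 \<subseteq> Y'" "witness_with E (iter E k) x B1"
            using sub_witness[OF exec xx x(2)] by blast
          have g1: "good E a0 k x B1" using good_sub[OF exec g' k(2)[unfolded Y'_def] k(3)] k(1) by simp
          then show ?thesis using k(1) by (intro exI[of _ k] exI[of _ B1]) auto
        qed
        have cf: "ins E x \<inter> ins E y = {}"
          if xy: "x \<in> Cf E n Y \<union> Cf E m Y'" "y \<in> Cf E n Y \<union> Cf E m Y'" "x \<noteq> y" for x y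
        proof (rule ccontr)
          assume ne: "ins E x \<inter> ins E y \<noteq> {}"
          then have xg: "x \<noteq> genesis E" and yg: "y \<noteq> genesis E" using gen_ins[OF exec] by auto
          obtain k1 B1 where k1: "k1 < max n m" "good E a0 k1 x B1" using subT[OF xy(1) xg] by blast
          obtain k2 B2 where k2: "k2 < max n m" "good E a0 k2 y B2" using subT[OF xy(2) yg] by blast
          have "max k1 k2 < max n m \<or> (max k1 k2 = max n m \<and> k1 + k2 < n + m)" using k1(1) k2(1) by auto
          then have "Q k1 k2" by (rule IH)
          then have "x \<in> past E B2 \<or> y \<in> past E B1" unfolding Q_def using k1(2) k2(2) by blast
          then show False
          proof
            assume "x \<in> past E B2"
            moreover have "is_tx E x" using xy(1) unfolding Cf_def by auto
            moreover have "witness_with E (iter E k2) y B2" using k2(2) unfolding good_def by auto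
            ultimately have "ins E x \<inter> ins E y = {}" using xy(3) unfolding witness_with_def by blast
            then show False using ne by simp
          next
            assume "y \<in> past E B1"
            moreover have "is_tx E y" using xy(2) unfolding Cf_def by auto
            moreover have "witness_with E (iter E k1) x B1" using k1(2) unfolding good_def by auto
            ultimately have "ins E y \<inter> ins E x = {}" using xy(3) unfolding witness_with_def by blast
            then show False using ne by blast
          qed
        qed
        define S where "S = signers E c B"
        define S' where "S' = signers E d B'"
        have SS: "\<not> honest E v" if "v \<in> S" "v \<in> S'" for v
        proof
          assume h: "honest E v"
          have "\<forall>a\<in>B. is_ack E a" "\<forall>a\<in>B'. is_ack E a" using wit wit' unfolding witness_with_def by auto
          then have "c \<in> past E B' \<or> d \<in> past E B"
            using honest_compare[OF exec that[unfolded S_def S'_def] h Bm B'm] by blast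
          then show False using nc nd by blast
        qed
        have fS: "finite S" "finite S'"
        proof -
          have "S \<subseteq> ackval E ` B" "S' \<subseteq> ackval E ` B'" unfolding S_def S'_def signers_def by auto
          moreover have "finite B" "finite B'" using wit wit' unfolding witness_with_def by auto
          ultimately show "finite S" "finite S'" by (meson finite_imageI finite_subset)+
        qed
        have Yc: "\<And>y z. y \<in> Y \<Longrightarrow> z \<in> refs E y \<Longrightarrow> z \<in> Y" unfolding Y_def by (rule past_closed)
        have Yc': "\<And>y z. y \<in> Y' \<Longrightarrow> z \<in> refs E y \<Longrightarrow> z \<in> Y'" unfolding Y'_def by (rule past_closed)
        have mon: "(\<Sum>u\<in>{u \<in> Ou E n Y. deleg E u \<in> S}. oval E u) + (\<Sum>u\<in>{u \<in> Ou E m Y'. deleg E u \<in> S'}. oval E u)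
          \<le> totalM E + (genesis_adv E + (\<Sum>x\<in>{x \<in> Cf E n Y \<union> Cf E m Y'. x \<noteq> genesis E \<and> \<not> honest E (txval E x)}. ih E x))"
          by (rule money[OF exec Ym Yc Yc' cf cr1 cr2 SS])
        have adv: "genesis_adv E + (\<Sum>x\<in>{x \<in> Cf E n Y \<union> Cf E m Y'. x \<noteq> genesis E \<and> \<not> honest E (txval E x)}. ih E x) < totalM E / 3"
        proof (rule adv_bound[OF exec a0 first])
          show "Cf E n Y \<union> Cf E m Y' \<subseteq> msgs E" using Ym unfolding Cf_def by auto
          show "is_tx E x" if "x \<in> Cf E n Y \<union> Cf E m Y'" for x using that unfolding Cf_def by auto
          show "tlt E x a0" if "x \<in> Cf E n Y \<union> Cf E m Y'" "x \<noteq> genesis E" "\<not> honest E (txval E x)" for x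
            using that g g' unfolding good_def Y_def Y'_def by blast
        qed
        have s1: "(\<Sum>u\<in>{u \<in> Ou E n Y. deleg E u \<in> S}. oval E u) > 2/3 * totalM E"
          using wit stake_sum[OF exec fS(1), of n Y] unfolding witness_with_def S_def Y_def by simp
        have s2: "(\<Sum>u\<in>{u \<in> Ou E m Y'. deleg E u \<in> S'}. oval E u) > 2/3 * totalM E"
          using wit' stake_sum[OF exec fS(2), of m Y'] unfolding witness_with_def S'_def Y'_def by simp
        show False using mon adv s1 s2 by linarith
      qed
    qed
  qed
  then show "good E a0 n c B \<Longrightarrow> good E a0 m d B' \<Longrightarrow> c \<in> past E B' \<or> d \<in> past E B"
    unfolding Q_def by blast
qed

end


context
  fixes E :: "('m,'k) abc"
  assumes exec: "abc_execution E"
begin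

lemma witnessing_iter:
  assumes w: "witnessing E t A"
  shows "\<exists>n. witness_with E (iter E n) t A"
proof -
  define S where "S = {x \<in> msgs E. x \<in> past E A \<and> is_tx E x \<and> conf E (past E A) x}"
  have fS: "finite S" unfolding S_def using fin_msgs[OF exec] by auto
  have "\<exists>N. \<forall>x\<in>S. iter E N (past E A) x"
  proof (rule finite_bound[OF exec fS])
    fix x assume "x \<in> S"
    then show "\<exists>n. iter E n (past E A) x" using conf_iter[OF exec] unfolding S_def by auto
  qed (rule iter_mono_n[OF exec])
  then obtain N where N: "\<forall>x\<in>S. iter E N (past E A) x" by blast
  have "witness_with E (iter E N) t A"
  proof (rule witness_mono[OF exec w[unfolded witnessing_def]])
    fix x assume "x \<in> past E A" "x \<in> msgs E" "is_tx E x" "conf E (past E A) x"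
    then have "x \<in> S" unfolding S_def by auto
    then show "iter E N (past E A) x" using N by auto
  qed
  then show ?thesis by blast
qed

lemma early_past:
  assumes A0m: "A0 \<subseteq> msgs E" and fA: "finite A0" "A0 \<noteq> {}" and acks: "\<forall>a\<in>A0. is_ack E a"
    and x: "x \<in> past E A0" "is_tx E x"
  shows "tlt E x (tmax E A0)"
proof -
  have tp: "tmax E A0 \<in> A0" "\<forall>a\<in>A0. tle E a (tmax E A0)" using tmax_prop[OF exec fA A0m] by auto
  obtain a where a: "a \<in> A0" "x \<in> past1 E a" using x(1) unfolding past_iff by blast
  have am: "a \<in> msgs E" using a A0m by auto
  have "x \<in> msgs E" "tle E x a" using past1_msgs[OF exec am a(2)] by auto
  moreover have "tle E a (tmax E A0)" using tp a by auto
  ultimately have le: "tle E x (tmax E A0)" using tle_trans[OF exec _ am] tp(1) A0m by blast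
  have "x \<noteq> tmax E A0" using x(2) acks tp(1) unfolding is_tx_def by auto
  then show ?thesis using le unfolding tle_def by auto
qed

end

theorem lemma3:
  fixes E :: "('m, 'k) abc" and t0 :: 'm and A0 :: "'m set"
  assumes exec: "abc_execution E"
    and t0_tx: "t0 \<in> msgs E" "is_tx E t0" "t0 \<noteq> genesis E"
    and t0_conf: "conf E (msgs E) t0"
    and A0: "A0 \<subseteq> msgs E" "witnessing E t0 A0"
    and first: "\<And>t A. t \<in> msgs E \<Longrightarrow> is_tx E t \<Longrightarrow> t \<noteq> genesis E \<Longrightarrow>
                  conf E (msgs E) t \<Longrightarrow> A \<subseteq> msgs E \<Longrightarrow> witnessing E t A \<Longrightarrow>
                  tle E (tmax E A0) (tmax E A)"
  shows "\<forall>t A. t \<in> msgs E \<and> is_tx E t \<and> conf E (msgs E) t \<and> A \<subseteq> msgs E \<and> witnessing E t A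
           \<longrightarrow> t0 \<in> past E A \<or> t \<in> past E A0"
proof -
  define a0 where "a0 = tmax E A0"
  have fA: "finite A0" "A0 \<noteq> {}" "\<forall>a\<in>A0. is_ack E a"
    using A0(2) witness_ne[OF exec] unfolding witnessing_def witness_with_def by auto
  have a0m: "a0 \<in> msgs E" using tmax_prop[OF exec fA(1,2) A0(1)] A0(1) unfolding a0_def by auto
  have first': "\<And>t A. t \<in> msgs E \<Longrightarrow> is_tx E t \<Longrightarrow> t \<noteq> genesis E \<Longrightarrow>
                  conf E (msgs E) t \<Longrightarrow> A \<subseteq> msgs E \<Longrightarrow> witnessing E t A \<Longrightarrow>
                  tle E a0 (tmax E A)" unfolding a0_def by (rule first)
  obtain n0 where n0: "witness_with E (iter E n0) t0 A0" using witnessing_iter[OF exec A0(2)] by blast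
  have g0: "good E a0 n0 t0 A0" unfolding good_def
  proof (intro conjI ballI impI)
    show "A0 \<subseteq> msgs E" by (rule A0(1))
    show "witness_with E (iter E n0) t0 A0" by (rule n0)
    fix x assume "x \<in> Cf E n0 (past E A0)"
    then have "x \<in> past E A0" "is_tx E x" unfolding Cf_def by auto
    then show "tlt E x a0" unfolding a0_def using early_past[OF exec A0(1) fA] by blast
  qed
  have M: "\<forall>x B. B \<subseteq> msgs E \<longrightarrow> witness_with E (iter E n) x B \<longrightarrow> t0 \<notin> past E B \<longrightarrow> x \<in> past E A0" for n
  proof (induction n rule: less_induct)
    case (less n)
    show ?case
    proof (intro allI impI)
      fix x B assume Bm: "B \<subseteq> msgs E" and w: "witness_with E (iter E n) x B" and nt: "t0 \<notin> past E B"
      have g: "good E a0 n x B" unfolding good_def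
      proof (intro conjI ballI impI)
        show "B \<subseteq> msgs E" by (rule Bm)
        show "witness_with E (iter E n) x B" by (rule w)
        fix y assume y: "y \<in> Cf E n (past E B)" "y \<noteq> genesis E"
        obtain k B1 where k: "n = Suc k" "B1 \<subseteq> past E B" "witness_with E (iter E k) y B1"
          using sub_witness[OF exec y] by blast
        have B1m: "B1 \<subseteq> msgs E" using k(2) past_msgs[OF exec Bm] by auto
        have "past E B1 \<subseteq> past E B" by (rule past_mono[OF k(2)])
        then have "t0 \<notin> past E B1" using nt by blast
        then have "y \<in> past E A0" using less.IH[of k] k B1m by blast
        moreover have "is_tx E y" using y unfolding Cf_def by auto
        ultimately show "tlt E y a0" unfolding a0_def using early_past[OF exec A0(1) fA] by blast
      qed
      have "t0 \<in> past E B \<or> x \<in> past E A0" by (rule GEN[OF exec a0m first' g0 g])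
      then show "x \<in> past E A0" using nt by blast
    qed
  qed
  show ?thesis
  proof (intro allI impI)
    fix t A assume "t \<in> msgs E \<and> is_tx E t \<and> conf E (msgs E) t \<and> A \<subseteq> msgs E \<and> witnessing E t A"
    then have Am: "A \<subseteq> msgs E" and w: "witnessing E t A" by auto
    obtain n where n: "witness_with E (iter E n) t A" using witnessing_iter[OF exec w] by blast
    show "t0 \<in> past E A \<or> t \<in> past E A0"
    proof (cases "t0 \<in> past E A")
      case True then show ?thesis by simp
    next
      case False then show ?thesis using M[of n] Am n by blast
    qed
  qed
qed


end
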